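(* Let $X\sim\mu=p^{\mathbb{Z}^d}$, $Y\sim\nu=q^{\mathbb{Z}^d}$ and let $\phi:X\to Y$ be a finitary homomorphism with coding radius $R_\phi$. Let $n,N\in\mathbb{N}$ with $N\ge 2n+1$, let $\hat X\sim p^{\mathbb{T}_N^d}$ and $\hat Y=\hat\phi^n(\hat X)$ be the $(\mathbb{T}_N^d,n)$-modeling of $\phi$, and let $\mathcal{J}_{N,n}^c=\{u\in\mathbb{T}_N^d:\hat\phi^n(\hat X)_u=*\}$. Then: (1) For every $u\in\mathbb{T}_N^d$, $\mathbf{P}[\hat\phi^n(\hat X)_u=*]=\mathbf{P}[R_\phi>n]$, and $\mathbf{E}[|\mathcal{J}_{N,n}^c|]=N^d\,\mathbf{P}[R_\phi>n]$. In particular, if $\mathbf{P}[R_\phi>n]=o(n^{-d\alpha})$ for some $\alpha>0$, then there is a sequence $\delta_N\searrow0$ such that $\mathbf{E}[|\mathcal{J}^c_{N,\lfloor\delta_N N\rfloor}|]=o(N^{d(1-\alpha)})$. (2) If $\mathcal{S}\subset\mathbb{Z}^d$ satisfies $\bigcup_{s\in\mathcal{S}}[s-n,s+n]^d\subseteq u_0+[1,N]^d$ for some $u_0\in\mathbb{Z}^d$, then there exists a coupling $\lambda_{\mathcal{S}}$ of $(\hat\phi^n(\hat X)_u)_{u\in\mathcal{S}}$ (indices taken mod $N$) with $(Y_u)_{u\in\mathcal{S}}\sim q^{\mathcal{S}}$ such that for every $u\in\mathcal{S}$, $\{\hat\phi^n(\hat X)_u\ne Y_u\}=\{\hat\phi^n(\hat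 X)_u=*\}$ (up to null sets).
   Context: $A,B$ are finite alphabets, $p,q$ probability vectors on $A,B$, $\mu=p^{\mathbb{Z}^d}$, $\nu=q^{\mathbb{Z}^d}$. A homomorphism $\phi:X\to Y$ is a measurable shift-commuting map $A^{\mathbb{Z}^d}\to B^{\mathbb{Z}^d}$ with $\phi_*\mu=\nu$. Its coding radius is $R_\phi(x)=\min\{n\in\mathbb{N}\cup\{\infty\}:\text{for }\mu\text{-a.e. }a,\ a|_{[-n,n]^d}=x|_{[-n,n]^d}\Rightarrow\phi(a)_0=\phi(x)_0\}$; $\phi$ is finitary if $R_\phi<\infty$ a.s. Let $*\notin B$. For $n\in\mathbb{N}$ define $\phi^n_0(x)=\phi(x)_0$ if $R_\phi(x)\le n$ and $\phi^n_0(x)=*$ otherwise; up to a $\mu$-null set, $\phi^n_0(x)$ is a function of $x|_{[-n,n]^d}$. Let $\mathbb{T}_N^d=\mathbb{Z}^d/(N\mathbb{Z})^d$; for $\hat x\in A^{\mathbb{T}_N^d}$ and $u\in\mathbb{Z}^d$ write $\hat x_u$ for $\hat x_{u\bmod N}$. For $N\ge 2n+1$, define $\hat\phi^n:A^{\mathbb{T}_N^d}\to(B\cup\{*\})^{\mathbb{T}_N^d}$ by letting $\hat\phi^n(\hat x)_u$ be the (a.e. unique) value of $\phi^n_0(T_{-u}x)$ for $x\in A^{\mathbb{Z}^d}$ agreeing with the $N$-periodic extension of $\hat x$ (i.e. the value of $\phi^n_0$ evaluated on the periodic extension of $T_{-u}\hat x$, where $(T_{-u}\hat x)_v=\hat x_{v+u}$).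 The $(\mathbb{T}_N^d,n)$-modeling of $\phi$ is the map $\hat\phi^n:\hat X\mapsto\hat Y:=\hat\phi^n(\hat X)$ with $\hat X\sim p^{\mathbb{T}_N^d}$. *)

theory Defs
  imports "HOL-Probability.Probability" "HOL-Probability.Product_PMF" "HOL-Library.Landau_Symbols"
begin

text \<open>Sites of Z^d are functions 'd \<Rightarrow> int, with d = CARD('d) (a finite index type).
  Configurations are functions from sites to a finite alphabet.\<close>

definition shift :: "('d \<Rightarrow> int) \<Rightarrow> (('d \<Rightarrow> int) \<Rightarrow> 'x) \<Rightarrow> (('d \<Rightarrow> int) \<Rightarrow> 'x)" where
  "shift w x = (\<lambda>v. x (\<lambda>i. v i - w i))"

definition bshift :: "'a pmf \<Rightarrow> (('d \<Rightarrow> int) \<Rightarrow> 'a) measure" where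
  "bshift p = PiM UNIV (\<lambda>_. measure_pmf p)"

definition homomorphism ::
  "'a pmf \<Rightarrow> 'b pmf \<Rightarrow> ((('d \<Rightarrow> int) \<Rightarrow> 'a) \<Rightarrow> (('d \<Rightarrow> int) \<Rightarrow> 'b)) \<Rightarrow> bool" where
  "homomorphism p q \<phi> \<longleftrightarrow>
     \<phi> \<in> measurable (bshift p) (bshift q) \<and>
     (\<forall>w x. \<phi> (shift w x) = shift w (\<phi> x)) \<and>
     distr (bshift p) (bshift q) \<phi> = bshift q"

definition coding_radius ::
  "'a pmf \<Rightarrow> ((('d \<Rightarrow> int) \<Rightarrow> 'a) \<Rightarrow> (('d \<Rightarrow> int) \<Rightarrow> 'b)) \<Rightarrow> (('d \<Rightarrow> int) \<Rightarrow> 'a) \<Rightarrow> enat" where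
  "coding_radius p \<phi> x = (LEAST n::enat.
     AE a in bshift p. (\<forall>v. (\<forall>i. enat (nat \<bar>v i\<bar>) \<le> n) \<longrightarrow> a v = x v)
                       \<longrightarrow> \<phi> a (\<lambda>_. 0) = \<phi> x (\<lambda>_. 0))"

definition finitary ::
  "'a pmf \<Rightarrow> ((('d \<Rightarrow> int) \<Rightarrow> 'a) \<Rightarrow> (('d \<Rightarrow> int) \<Rightarrow> 'b)) \<Rightarrow> bool" where
  "finitary p \<phi> \<longleftrightarrow> (AE x in bshift p. coding_radius p \<phi> x < \<infinity>)"

definition box :: "nat \<Rightarrow> ('d \<Rightarrow> int) set" where
  "box n = {v. \<forall>i. \<bar>v i\<bar> \<le> int n}"

text \<open>phi^n_0, with * represented by None.\<close>
definition phi_n ::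
  "'a pmf \<Rightarrow> ((('d \<Rightarrow> int) \<Rightarrow> 'a) \<Rightarrow> (('d \<Rightarrow> int) \<Rightarrow> 'b)) \<Rightarrow> nat \<Rightarrow> (('d \<Rightarrow> int) \<Rightarrow> 'a) \<Rightarrow> 'b option" where
  "phi_n p \<phi> n x = (if coding_radius p \<phi> x \<le> enat n then Some (\<phi> x (\<lambda>_. 0)) else None)"

definition block_rule ::
  "'a pmf \<Rightarrow> ((('d \<Rightarrow> int) \<Rightarrow> 'a) \<Rightarrow> (('d \<Rightarrow> int) \<Rightarrow> 'b)) \<Rightarrow> nat \<Rightarrow> (('d \<Rightarrow> int) \<Rightarrow> 'a) \<Rightarrow> 'b option" where
  "block_rule p \<phi> n = (SOME F.
      (\<forall>x y. (\<forall>v\<in>box n. x v = y v) \<longrightarrow> F x = F y) \<and>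
      (AE x in bshift p. F x = phi_n p \<phi> n x))"

text \<open>The discrete torus T_N^d, represented by the residues {0..N-1}^d.\<close>
definition torus :: "nat \<Rightarrow> ('d \<Rightarrow> int) set" where
  "torus N = {u. \<forall>i. 0 \<le> u i \<and> u i < int N}"

definition torus_pmf :: "nat \<Rightarrow> 'a pmf \<Rightarrow> (('d \<Rightarrow> int) \<Rightarrow> 'a) pmf" where
  "torus_pmf N p = Pi_pmf (torus N) undefined (\<lambda>_. p)"

text \<open>The (T_N^d,n)-modeling: value at u \<in> Z^d (indices taken mod N) of hat-phi^n applied to xh.\<close>
definition torus_model ::
  "'a pmf \<Rightarrow> ((('d \<Rightarrow> int) \<Rightarrow> 'a) \<Rightarrow> (('d \<Rightarrow> int) \<Rightarrow> 'b)) \<Rightarrow> nat \<Rightarrow> nat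
     \<Rightarrow> (('d \<Rightarrow> int) \<Rightarrow> 'a) \<Rightarrow> ('d \<Rightarrow> int) \<Rightarrow> 'b option" where
  "torus_model p \<phi> n N xh u = block_rule p \<phi> n (\<lambda>v. xh (\<lambda>i. (v i + u i) mod int N))"

definition prob_R_gt ::
  "'a pmf \<Rightarrow> ((('d \<Rightarrow> int) \<Rightarrow> 'a) \<Rightarrow> (('d \<Rightarrow> int) \<Rightarrow> 'b)) \<Rightarrow> nat \<Rightarrow> real" where
  "prob_R_gt p \<phi> n = measure (bshift p) {x. enat n < coding_radius p \<phi> x}"

definition exp_Jc ::
  "'a pmf \<Rightarrow> ((('d \<Rightarrow> int) \<Rightarrow> 'a) \<Rightarrow> (('d \<Rightarrow> int) \<Rightarrow> 'b)) \<Rightarrow> nat \<Rightarrow> nat \<Rightarrow> real" where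
  "exp_Jc p \<phi> N n = measure_pmf.expectation (torus_pmf N p)
     (\<lambda>xh. real (card {u \<in> torus N. torus_model p \<phi> n N xh u = None}))"

end

theory Submission
  imports Defs
begin


lemma pps: "product_prob_space (\<lambda>_. measure_pmf p)"
  unfolding product_prob_space_def product_prob_space_axioms_def product_sigma_finite_def
  by (auto intro: prob_space_imp_sigma_finite prob_space_measure_pmf)

lemma space_bshift[simp]: "space (bshift p) = UNIV"
  by (simp add: bshift_def space_PiM)

lemma prob_space_bshift: "prob_space (bshift p)"
proof -
  interpret product_prob_space "\<lambda>_. measure_pmf p" UNIV by (rule pps)
  show ?thesis unfolding bshift_def by (rule P.prob_space_axioms)
qed

lemma meas_fin_range:
  assumes "finite (range f)" "\<And>y. f -` {y} \<inter> space M \<in> sets M"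
  shows "f \<in> measurable M (count_space UNIV)"
proof (rule measurableI)
  fix A
  have "f -` A \<inter> space M = (\<Union>y\<in>A \<inter> range f. f -` {y} \<inter> space M)" by auto
  also have "\<dots> \<in> sets M" using assms by (intro sets.finite_UN) auto
  finally show "f -` A \<inter> space M \<in> sets M" .
qed auto

lemma finite_restrict_range:
  fixes W :: "'i set" assumes "finite W"
  shows "finite (range (\<lambda>x::'i \<Rightarrow> 'a::finite. restrict x W))"
proof -
  have "range (\<lambda>x::'i \<Rightarrow> 'a. restrict x W) \<subseteq> PiE W (\<lambda>_. UNIV)" by auto
  moreover have "finite (PiE W (\<lambda>_. UNIV::'a set))" using assms by (intro finite_PiE) auto
  ultimately show ?thesis by (rule finite_subset)
qed

lemma cyl_eq:
  assumes "f \<in> PiE W (\<lambda>_. UNIV)"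
  shows "(\<lambda>x. restrict x W) -` {f} \<inter> space (bshift p) =
     prod_emb UNIV (\<lambda>_. measure_pmf p) W (PiE W (\<lambda>v. {f v}))"
  using assms unfolding prod_emb_def bshift_def
  by (auto simp: space_PiM PiE_iff extensional_def fun_eq_iff)

lemma restrict_meas:
  fixes W :: "('d \<Rightarrow> int) set" assumes "finite W"
  shows "(\<lambda>x::('d \<Rightarrow> int) \<Rightarrow> 'a::finite. restrict x W) \<in> measurable (bshift p) (count_space UNIV)"
proof (rule meas_fin_range[OF finite_restrict_range[OF assms]])
  fix f :: "('d \<Rightarrow> int) \<Rightarrow> 'a"
  show "(\<lambda>x. restrict x W) -` {f} \<inter> space (bshift p) \<in> sets (bshift p)"
  proof (cases "f \<in> PiE W (\<lambda>_. UNIV)")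
    case True
    show ?thesis unfolding cyl_eq[OF True] unfolding bshift_def
      using assms by (intro sets_PiM_I) auto
  next
    case False
    then have "(\<lambda>x. restrict x W) -` {f} \<inter> space (bshift p) = {}" by auto
    then show ?thesis by simp
  qed
qed

lemma KEY:
  fixes W :: "('d \<Rightarrow> int) set" and p :: "'a::finite pmf" assumes W: "finite W"
  shows "distr (bshift p) (count_space UNIV) (\<lambda>x. restrict x W) = measure_pmf (Pi_pmf W undefined (\<lambda>_. p))"
proof (rule measure_eqI_countable_AE[where \<Omega> = "PiE W (\<lambda>_. UNIV)"])
  interpret product_prob_space "\<lambda>_. measure_pmf p" UNIV by (rule pps)
  show "AE x in distr (bshift p) (count_space UNIV) (\<lambda>x. restrict x W). x \<in> PiE W (\<lambda>_. UNIV)"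
    by (subst AE_distr_iff[OF restrict_meas[OF W]]) auto
  show "AE x in measure_pmf (Pi_pmf W undefined (\<lambda>_. p)). x \<in> PiE W (\<lambda>_. UNIV)"
    using set_Pi_pmf_subset[OF W, of undefined "\<lambda>_. p"]
    by (intro AE_pmfI) (auto simp: PiE_iff extensional_def)
  show "countable (PiE W (\<lambda>_. UNIV::'a set))"
    using W by (intro countable_finite finite_PiE) auto
  fix f assume f: "f \<in> PiE W (\<lambda>_. UNIV::'a set)"
  have "emeasure (distr (bshift p) (count_space UNIV) (\<lambda>x. restrict x W)) {f}
      = emeasure (bshift p) ((\<lambda>x. restrict x W) -` {f} \<inter> space (bshift p))"
    by (rule emeasure_distr[OF restrict_meas[OF W]]) auto
  also have "\<dots> = (\<Prod>v\<in>W. emeasure (measure_pmf p) {f v})"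
    unfolding cyl_eq[OF f] unfolding bshift_def using W
    by (intro emeasure_PiM_emb) auto
  also have "\<dots> = ennreal (\<Prod>v\<in>W. pmf p (f v))"
    by (simp add: emeasure_pmf_single prod_ennreal)
  also have "\<dots> = emeasure (measure_pmf (Pi_pmf W undefined (\<lambda>_. p))) {f}"
    using f W by (simp add: emeasure_pmf_single pmf_Pi PiE_iff extensional_def)
  finally show "emeasure (distr (bshift p) (count_space UNIV) (\<lambda>x. restrict x W)) {f} =
      emeasure (measure_pmf (Pi_pmf W undefined (\<lambda>_. p))) {f}" .
qed auto




definition window :: "('d \<Rightarrow> int) \<Rightarrow> nat \<Rightarrow> ('d \<Rightarrow> int) set" where
  "window u0 N = {v. \<forall>i. u0 i + 1 \<le> v i \<and> v i \<le> u0 i + int N}"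

lemma torus_PiE: "torus N = PiE UNIV (\<lambda>_. {0..<int N})"
  by (auto simp: torus_def PiE_iff)

lemma finite_torus: "finite (torus N :: ('d::finite \<Rightarrow> int) set)"
  unfolding torus_PiE by (intro finite_PiE) auto

lemma card_torus: "card (torus N :: ('d::finite \<Rightarrow> int) set) = N ^ CARD('d)"
  unfolding torus_PiE by (simp add: card_PiE)

lemma window_PiE: "window u0 N = PiE UNIV (\<lambda>i. {u0 i + 1..u0 i + int N})"
  by (auto simp: window_def PiE_iff)

lemma finite_window: "finite (window u0 N :: ('d::finite \<Rightarrow> int) set)"
  unfolding window_PiE by (intro finite_PiE) auto

lemma mod_inj_window:
  fixes x y a :: int
  assumes "a + 1 \<le> x" "x \<le> a + int N" "a + 1 \<le> y" "y \<le> a + int N" "x mod int N = y mod int N"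
  shows "x = y"
proof (rule ccontr)
  assume ne: "x \<noteq> y"
  have "int N dvd (x - y)" using assms(5) by (simp add: mod_eq_dvd_iff)
  then have "\<bar>int N\<bar> \<le> \<bar>x - y\<bar>" using ne by (intro dvd_imp_le_int) auto
  moreover have "\<bar>x - y\<bar> < int N" using assms(1-4) by linarith
  ultimately show False by linarith
qed

lemma bij_window:
  fixes u0 :: "'d::finite \<Rightarrow> int"
  shows "bij_betw (\<lambda>v. if v \<in> window u0 N then (\<lambda>i. v i mod int N) else (\<lambda>i. -1))
     (window u0 N) (torus N)"
proof (rule bij_betwI')
  fix v w assume v: "v \<in> window u0 N" and w: "w \<in> window u0 N"
  show "((if v \<in> window u0 N then (\<lambda>i. v i mod int N) else (\<lambda>i. -1)) =
        (if w \<in> window u0 N then (\<lambda>i. w i mod int N) else (\<lambda>i. -1))) = (v = w)"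
  proof
    assume H: "(if v \<in> window u0 N then (\<lambda>i. v i mod int N) else (\<lambda>i. -1)) =
        (if w \<in> window u0 N then (\<lambda>i. w i mod int N) else (\<lambda>i. -1))"
    have H2: "(\<lambda>i. v i mod int N) = (\<lambda>i. w i mod int N)" using H v w by simp
    show "v = w"
    proof
      fix i
      have a: "u0 i + 1 \<le> v i" "v i \<le> u0 i + int N" "u0 i + 1 \<le> w i" "w i \<le> u0 i + int N"
        using v w by (simp_all add: window_def)
      show "v i = w i" by (rule mod_inj_window[OF a fun_cong[OF H2]])
    qed
  qed simp
next
  fix v assume v: "v \<in> window u0 N"
  obtain i0 :: 'd where True by simp
  have "u0 i0 + 1 \<le> v i0 \<and> v i0 \<le> u0 i0 + int N" using v by (simp add: window_def)
  then have "int N > 0" by linarith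
  then show "(if v \<in> window u0 N then (\<lambda>i. v i mod int N) else (\<lambda>i. -1)) \<in> torus N"
    using v by (simp add: torus_def)
next
  fix t :: "'d \<Rightarrow> int" assume t: "t \<in> torus N"
  define v where "v = (\<lambda>i. u0 i + 1 + (t i - u0 i - 1) mod int N)"
  obtain i0 :: 'd where True by simp
  have "0 \<le> t i0 \<and> t i0 < int N" using t by (simp add: torus_def)
  then have pos: "int N > 0" by linarith
  have vw: "v \<in> window u0 N"
    unfolding window_def mem_Collect_eq
  proof
    fix i
    have "0 \<le> (t i - u0 i - 1) mod int N \<and> (t i - u0 i - 1) mod int N < int N"
      using pos by simp
    then show "u0 i + 1 \<le> v i \<and> v i \<le> u0 i + int N" unfolding v_def by linarith
  qed
  have vt: "v i mod int N = t i" for i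
  proof -
    have "v i mod int N = (u0 i + 1 + (t i - u0 i - 1)) mod int N"
      unfolding v_def by (simp add: mod_add_right_eq)
    also have "\<dots> = t i" using t by (simp add: torus_def)
    finally show ?thesis .
  qed
  have "t = (if v \<in> window u0 N then (\<lambda>i. v i mod int N) else (\<lambda>i. -1))"
    using vw vt by simp
  then show "\<exists>v\<in>window u0 N. t = (if v \<in> window u0 N then (\<lambda>i. v i mod int N) else (\<lambda>i. -1))"
    using vw by blast
qed

lemma TOR:
  fixes u0 :: "'d::finite \<Rightarrow> int" and p :: "'a pmf"
  shows "map_pmf (\<lambda>xh. restrict (\<lambda>v. xh (\<lambda>i. v i mod int N)) (window u0 N)) (torus_pmf N p)
       = Pi_pmf (window u0 N) undefined (\<lambda>_. p)"
proof -
  define h where "h = (\<lambda>v. if v \<in> window u0 N then (\<lambda>i. v i mod int N) else (\<lambda>i::'d. -1::int))"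
  have nt: "(\<lambda>i::'d. -1::int) \<notin> torus N" by (simp add: torus_def)
  have bij: "bij_betw h (window u0 N) (torus N)" unfolding h_def by (rule bij_window)
  have out: "h x \<notin> torus N" if "x \<notin> window u0 N" for x using nt that by (simp add: h_def)
  have "Pi_pmf (window u0 N) undefined (\<lambda>_. p) = map_pmf (\<lambda>g. g \<circ> h) (Pi_pmf (torus N) undefined (\<lambda>_. p))"
    by (rule Pi_pmf_bij_betw[OF finite_window bij out])
  also have "\<dots> = map_pmf (\<lambda>xh. restrict (\<lambda>v. xh (\<lambda>i. v i mod int N)) (window u0 N)) (torus_pmf N p)"
    unfolding torus_pmf_def
  proof (intro map_pmf_cong refl)
    fix g :: "('d \<Rightarrow> int) \<Rightarrow> 'a" assume gs: "g \<in> set_pmf (Pi_pmf (torus N) undefined (\<lambda>_. p))"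
    have "g \<in> {f. \<forall>x. x \<notin> torus N \<longrightarrow> f x = undefined}"
      by (rule subsetD[OF set_Pi_pmf_subset[OF finite_torus] gs])
    then have g: "\<And>x. x \<notin> torus N \<Longrightarrow> g x = undefined" by simp
    show "g \<circ> h = restrict (\<lambda>v. g (\<lambda>i. v i mod int N)) (window u0 N)"
    proof
      fix v show "(g \<circ> h) v = restrict (\<lambda>v. g (\<lambda>i. v i mod int N)) (window u0 N) v"
        by (cases "v \<in> window u0 N") (simp_all add: h_def g[OF nt])
    qed
  qed
  finally show ?thesis by (rule sym)
qed




definition CC :: "'a pmf \<Rightarrow> ((('d \<Rightarrow> int) \<Rightarrow> 'a) \<Rightarrow> (('d \<Rightarrow> int) \<Rightarrow> 'b)) \<Rightarrow> nat
   \<Rightarrow> (('d \<Rightarrow> int) \<Rightarrow> 'a) \<Rightarrow> 'b \<Rightarrow> bool" where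
  "CC p \<phi> n w b \<longleftrightarrow> (AE a in bshift p. restrict a (box n) = w \<longrightarrow> \<phi> a (\<lambda>_. 0) = b)"

lemma box_PiE: "box n = PiE UNIV (\<lambda>_. {- int n..int n})"
proof -
  have e: "\<bar>y\<bar> \<le> int n \<longleftrightarrow> y \<in> {- int n..int n}" for y :: int by auto
  show ?thesis unfolding set_eq_iff box_def PiE_iff e by simp
qed

lemma finite_box: "finite (box n :: ('d::finite \<Rightarrow> int) set)"
  unfolding box_PiE by (intro finite_PiE) auto

lemma box_enat: "(\<forall>i. enat (nat \<bar>v i\<bar>) \<le> enat n) \<longleftrightarrow> v \<in> box n"
  by (auto simp: box_def) (metis nat_le_iff)+

lemma R_le_iff:
  fixes p :: "'a pmf" and \<phi> :: "(('d \<Rightarrow> int) \<Rightarrow> 'a) \<Rightarrow> (('d \<Rightarrow> int) \<Rightarrow> 'b)"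
  shows "coding_radius p \<phi> x \<le> enat n \<longleftrightarrow> CC p \<phi> n (restrict x (box n)) (\<phi> x (\<lambda>_. 0))"
proof -
  define Q where "Q m = (AE a in bshift p. (\<forall>v. (\<forall>i. enat (nat \<bar>v i\<bar>) \<le> m) \<longrightarrow> a v = x v)
                       \<longrightarrow> \<phi> a (\<lambda>_. 0) = \<phi> x (\<lambda>_. 0))" for m
  have R: "coding_radius p \<phi> x = (LEAST m. Q m)" unfolding coding_radius_def Q_def ..
  have Qinf: "Q \<infinity>" unfolding Q_def
  proof (rule AE_I2, rule impI)
    fix a assume "\<forall>v. (\<forall>i. enat (nat \<bar>v i\<bar>) \<le> \<infinity>) \<longrightarrow> a v = x v"
    then have "a = x" by (auto intro!: ext)
    then show "\<phi> a (\<lambda>_. 0) = \<phi> x (\<lambda>_. 0)" by simp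
  qed
  have Qmono: "Q m'" if "Q m" "m \<le> m'" for m m'
  proof -
    have "AE a in bshift p. ((\<forall>v. (\<forall>i. enat (nat \<bar>v i\<bar>) \<le> m') \<longrightarrow> a v = x v) \<longrightarrow> \<phi> a (\<lambda>_. 0) = \<phi> x (\<lambda>_. 0))"
      using that(1) unfolding Q_def
    proof (rule AE_mp, intro AE_I2 impI)
      fix a assume H: "(\<forall>v. (\<forall>i. enat (nat \<bar>v i\<bar>) \<le> m) \<longrightarrow> a v = x v) \<longrightarrow> \<phi> a (\<lambda>_. 0) = \<phi> x (\<lambda>_. 0)"
        and H2: "\<forall>v. (\<forall>i. enat (nat \<bar>v i\<bar>) \<le> m') \<longrightarrow> a v = x v"
      have "\<forall>v. (\<forall>i. enat (nat \<bar>v i\<bar>) \<le> m) \<longrightarrow> a v = x v" using H2 order.trans[OF _ that(2)] by blast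
      then show "\<phi> a (\<lambda>_. 0) = \<phi> x (\<lambda>_. 0)" using H by blast
    qed
    then show ?thesis unfolding Q_def .
  qed
  have Qn: "Q (enat n) \<longleftrightarrow> CC p \<phi> n (restrict x (box n)) (\<phi> x (\<lambda>_. 0))"
  proof -
    have "((\<forall>v. (\<forall>i. enat (nat \<bar>v i\<bar>) \<le> enat n) \<longrightarrow> a v = x v)) \<longleftrightarrow> restrict a (box n) = restrict x (box n)" for a :: "('d \<Rightarrow> int) \<Rightarrow> 'a"
      unfolding box_enat by (auto simp: fun_eq_iff; metis restrict_apply')
    then show ?thesis unfolding Q_def CC_def by simp
  qed
  show ?thesis
  proof
    assume "coding_radius p \<phi> x \<le> enat n"
    moreover have "Q (coding_radius p \<phi> x)" unfolding R using Qinf by (rule LeastI)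
    ultimately show "CC p \<phi> n (restrict x (box n)) (\<phi> x (\<lambda>_. 0))" using Qmono Qn by blast
  next
    assume "CC p \<phi> n (restrict x (box n)) (\<phi> x (\<lambda>_. 0))"
    then have "Q (enat n)" using Qn by simp
    then show "coding_radius p \<phi> x \<le> enat n" unfolding R by (rule Least_le)
  qed
qed

lemma hom_meas: "homomorphism p q \<phi> \<Longrightarrow> \<phi> \<in> measurable (bshift p) (bshift q)"
  by (simp add: homomorphism_def)

lemma comp_meas:
  fixes p :: "'a pmf" and \<phi> :: "(('d \<Rightarrow> int) \<Rightarrow> 'a) \<Rightarrow> (('d \<Rightarrow> int) \<Rightarrow> 'b)" and u :: "'d \<Rightarrow> int"
  assumes "\<phi> \<in> measurable (bshift p) (bshift (q::'b pmf))"
  shows "(\<lambda>x. \<phi> x u) \<in> measurable (bshift p) (count_space UNIV)"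
proof -
  have "(\<lambda>x. \<phi> x u) \<in> measurable (bshift p) (measure_pmf q)"
    using measurable_compose[OF assms[unfolded bshift_def] measurable_component_singleton[OF UNIV_I]]
    by (simp add: bshift_def)
  then show ?thesis by (simp add: measurable_cong_sets)
qed

lemma meas_R:
  fixes p :: "'a::finite pmf" and q :: "'b::finite pmf"
    and \<phi> :: "(('d::finite \<Rightarrow> int) \<Rightarrow> 'a) \<Rightarrow> (('d \<Rightarrow> int) \<Rightarrow> 'b)"
  assumes m: "\<phi> \<in> measurable (bshift p) (bshift q)"
  shows "{x. coding_radius p \<phi> x \<le> enat n} \<in> sets (bshift p)"
    "{x. enat n < coding_radius p \<phi> x} \<in> sets (bshift p)"
proof -
  define G where "G x = (restrict x (box n), \<phi> x (\<lambda>_. 0))" for x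
  have Gm: "G \<in> measurable (bshift p) (count_space UNIV)"
  proof (rule meas_fin_range)
    have "range G \<subseteq> range (\<lambda>x::('d \<Rightarrow> int) \<Rightarrow> 'a. restrict x (box n)) \<times> UNIV"
      by (auto simp: G_def)
    moreover have "finite (range (\<lambda>x::('d \<Rightarrow> int) \<Rightarrow> 'a. restrict x (box n)) \<times> (UNIV :: 'b set))"
      using finite_restrict_range[OF finite_box] by (intro finite_cartesian_product) auto
    ultimately show "finite (range G)" by (rule finite_subset)
  next
    fix y :: "(('d \<Rightarrow> int) \<Rightarrow> 'a) \<times> 'b"
    have "G -` {y} \<inter> space (bshift p) =
       ((\<lambda>x. restrict x (box n)) -` {fst y} \<inter> space (bshift p)) \<inter> ((\<lambda>x. \<phi> x (\<lambda>_. 0)) -` {snd y} \<inter> space (bshift p))"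
      by (cases y) (auto simp: G_def)
    also have "\<dots> \<in> sets (bshift p)"
      using measurable_sets[OF restrict_meas[OF finite_box], of "{fst y}"]
            measurable_sets[OF comp_meas[OF m], of "{snd y}"]
      by auto
    finally show "G -` {y} \<inter> space (bshift p) \<in> sets (bshift p)" .
  qed
  have eq: "{x. coding_radius p \<phi> x \<le> enat n} = G -` {y. CC p \<phi> n (fst y) (snd y)} \<inter> space (bshift p)"
    by (auto simp: R_le_iff G_def)
  show 1: "{x. coding_radius p \<phi> x \<le> enat n} \<in> sets (bshift p)"
    unfolding eq by (rule measurable_sets[OF Gm]) auto
  have "{x. enat n < coding_radius p \<phi> x} = space (bshift p) - {x. coding_radius p \<phi> x \<le> enat n}"
    by (auto simp: not_le)
  then show "{x. enat n < coding_radius p \<phi> x} \<in> sets (bshift p)" using sets.compl_sets[OF 1] by simp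
qed

lemma block_rule_ex:
  fixes p :: "'a::finite pmf"
    and \<phi> :: "(('d::finite \<Rightarrow> int) \<Rightarrow> 'a) \<Rightarrow> (('d \<Rightarrow> int) \<Rightarrow> 'b::finite)"
  shows "\<exists>F. (\<forall>x y. (\<forall>v\<in>box n. x v = y v) \<longrightarrow> F x = F y) \<and>
      (AE x in bshift p. F x = phi_n p \<phi> n x)"
proof -
  define F0 where "F0 x = (if \<exists>b. CC p \<phi> n (restrict x (box n)) b
      then Some (SOME b. CC p \<phi> n (restrict x (box n)) b) else None)" for x
  define Fin where "Fin = {wb. wb \<in> PiE (box n) (\<lambda>_. UNIV :: 'a set) \<times> (UNIV :: 'b set) \<and> CC p \<phi> n (fst wb) (snd wb)}"
  have fin: "finite Fin" unfolding Fin_def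
    by (rule finite_subset[of _ "PiE (box n) (\<lambda>_. UNIV :: 'a set) \<times> (UNIV :: 'b set)"])
       (auto intro!: finite_PiE finite_box)
  have loc: "F0 x = F0 y" if "\<forall>v\<in>box n. x v = y v" for x y
  proof -
    have "restrict x (box n) = restrict y (box n)" using that by (auto simp: fun_eq_iff)
    then show ?thesis by (simp add: F0_def)
  qed
  have "AE a in bshift p. \<forall>wb\<in>Fin. restrict a (box n) = fst wb \<longrightarrow> \<phi> a (\<lambda>_. 0) = snd wb"
    by (rule AE_finite_allI[OF fin]) (auto simp: Fin_def CC_def)
  then have "AE a in bshift p. F0 a = phi_n p \<phi> n a"
  proof (rule AE_mp, intro AE_I2 impI)
    fix a assume H: "\<forall>wb\<in>Fin. restrict a (box n) = fst wb \<longrightarrow> \<phi> a (\<lambda>_. 0) = snd wb"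
    show "F0 a = phi_n p \<phi> n a"
    proof (cases "\<exists>b. CC p \<phi> n (restrict a (box n)) b")
      case True
      define b0 where "b0 = (SOME b. CC p \<phi> n (restrict a (box n)) b)"
      have cb: "CC p \<phi> n (restrict a (box n)) b0" unfolding b0_def using True by (rule someI_ex)
      then have "(restrict a (box n), b0) \<in> Fin" by (auto simp: Fin_def)
      then have "\<phi> a (\<lambda>_. 0) = b0" using H by auto
      then show ?thesis using True cb by (simp add: F0_def phi_n_def R_le_iff b0_def)
    next
      case False
      then show ?thesis by (auto simp: F0_def phi_n_def R_le_iff)
    qed
  qed
  then show ?thesis using loc by blast
qed

lemma BR:
  fixes p :: "'a::finite pmf"
    and \<phi> :: "(('d::finite \<Rightarrow> int) \<Rightarrow> 'a) \<Rightarrow> (('d \<Rightarrow> int) \<Rightarrow> 'b::finite)"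
  shows BR_loc: "(\<forall>v\<in>box n. x v = y v) \<Longrightarrow> block_rule p \<phi> n x = block_rule p \<phi> n y"
    and BR_ae: "AE x in bshift p. block_rule p \<phi> n x = phi_n p \<phi> n x"
proof -
  have "(\<forall>x y. (\<forall>v\<in>box n. x v = y v) \<longrightarrow> block_rule p \<phi> n x = block_rule p \<phi> n y) \<and>
      (AE x in bshift p. block_rule p \<phi> n x = phi_n p \<phi> n x)"
    unfolding block_rule_def by (rule someI_ex[OF block_rule_ex])
  then show "(\<forall>v\<in>box n. x v = y v) \<Longrightarrow> block_rule p \<phi> n x = block_rule p \<phi> n y"
    and "AE x in bshift p. block_rule p \<phi> n x = phi_n p \<phi> n x" by blast+
qed




lemma shift_meas: "shift w \<in> measurable (bshift p) (bshift p)"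
  unfolding shift_def bshift_def
  by (rule measurable_PiM_single'[where f="\<lambda>v x. x (\<lambda>i. v i - w i)", simplified])
     (auto simp: space_PiM)

lemma shift_inv:
  fixes p :: "'a pmf" and w :: "'d \<Rightarrow> int"
  shows "distr (bshift p) (bshift p) (shift w) = bshift p"
proof -
  interpret product_prob_space "\<lambda>_. measure_pmf p" "UNIV :: ('d \<Rightarrow> int) set" by (rule pps)
  show ?thesis unfolding bshift_def
  proof (rule measure_eqI_PiM_infinite)
    show "sets (distr (Pi\<^sub>M UNIV (\<lambda>_. measure_pmf p)) (Pi\<^sub>M UNIV (\<lambda>_. measure_pmf p)) (shift w)) =
        sets (Pi\<^sub>M UNIV (\<lambda>_. measure_pmf p))" by simp
    show "finite_measure (distr (Pi\<^sub>M UNIV (\<lambda>_. measure_pmf p)) (Pi\<^sub>M UNIV (\<lambda>_. measure_pmf p)) (shift w))"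
      using prob_space.prob_space_distr[OF P.prob_space_axioms shift_meas[unfolded bshift_def]]
      by (simp add: prob_space_def)
  next
    fix A :: "('d \<Rightarrow> int) \<Rightarrow> 'a set" and J :: "('d \<Rightarrow> int) set"
    assume J: "finite J" "J \<subseteq> UNIV"
    define t where "t = (\<lambda>j::'d \<Rightarrow> int. \<lambda>i. j i - w i)"
    define t' where "t' = (\<lambda>j::'d \<Rightarrow> int. \<lambda>i. j i + w i)"
    have tt: "t' (t j) = j" "t (t' j) = j" for j by (auto simp: t_def t'_def)
    have inj: "inj t" by (metis injI tt(1))
    have pre: "shift w -` prod_emb UNIV (\<lambda>_. measure_pmf p) J (Pi\<^sub>E J A) \<inter> space (Pi\<^sub>M UNIV (\<lambda>_. measure_pmf p))
       = prod_emb UNIV (\<lambda>_. measure_pmf p) (t ` J) (Pi\<^sub>E (t ` J) (\<lambda>j. A (t' j)))"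
      by (auto simp: prod_emb_iff shift_def space_PiM PiE_iff t_def[symmetric] tt extensional_def) (auto simp: t_def)
    have "emeasure (distr (Pi\<^sub>M UNIV (\<lambda>_. measure_pmf p)) (Pi\<^sub>M UNIV (\<lambda>_. measure_pmf p)) (shift w))
            (prod_emb UNIV (\<lambda>_. measure_pmf p) J (Pi\<^sub>E J A))
        = emeasure (Pi\<^sub>M UNIV (\<lambda>_. measure_pmf p)) (prod_emb UNIV (\<lambda>_. measure_pmf p) (t ` J) (Pi\<^sub>E (t ` J) (\<lambda>j. A (t' j))))"
      using J by (subst emeasure_distr[OF shift_meas[unfolded bshift_def]])
         (auto simp: pre intro!: sets_PiM_I)
    also have "\<dots> = (\<Prod>j\<in>t ` J. emeasure (measure_pmf p) (A (t' j)))"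
      using J by (intro emeasure_PiM_emb) auto
    also have "\<dots> = (\<Prod>j\<in>J. emeasure (measure_pmf p) (A j))"
      by (subst prod.reindex[OF inj_on_subset[OF inj subset_UNIV]]) (simp add: tt o_def)
    also have "\<dots> = emeasure (Pi\<^sub>M UNIV (\<lambda>_. measure_pmf p)) (prod_emb UNIV (\<lambda>_. measure_pmf p) J (Pi\<^sub>E J A))"
      using J by (intro emeasure_PiM_emb[symmetric]) auto
    finally show "emeasure (distr (Pi\<^sub>M UNIV (\<lambda>_. measure_pmf p)) (Pi\<^sub>M UNIV (\<lambda>_. measure_pmf p)) (shift w))
            (prod_emb UNIV (\<lambda>_. measure_pmf p) J (Pi\<^sub>E J A)) =
        emeasure (Pi\<^sub>M UNIV (\<lambda>_. measure_pmf p)) (prod_emb UNIV (\<lambda>_. measure_pmf p) J (Pi\<^sub>E J A))" .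
  qed (rule refl)
qed

lemma AE_shift:
  assumes "AE x in bshift p. P x"
  shows "AE x in bshift p. P (shift w x)"
proof (rule AE_distrD[OF shift_meas])
  show "AE x in distr (bshift p) (bshift p) (shift w). P x"
    unfolding shift_inv by (rule assms)
qed

lemma measure_shift:
  assumes "A \<in> sets (bshift p)"
  shows "measure (bshift p) (shift w -` A) = measure (bshift p) A"
proof -
  have "measure (bshift p) A = measure (distr (bshift p) (bshift p) (shift w)) A" by (simp add: shift_inv)
  also have "\<dots> = measure (bshift p) (shift w -` A \<inter> space (bshift p))"
    by (rule measure_distr[OF shift_meas assms])
  finally show ?thesis by simp
qed

lemma DL:
  fixes W :: "('d::finite \<Rightarrow> int) set" and p :: "'a::finite pmf"
  assumes W: "finite W"
  shows "distr (bshift p) (count_space UNIV) (\<lambda>x. H (restrict x W)) = measure_pmf (map_pmf H (Pi_pmf W undefined (\<lambda>_. p)))"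
proof -
  have "distr (bshift p) (count_space UNIV) (\<lambda>x. H (restrict x W))
     = distr (distr (bshift p) (count_space UNIV) (\<lambda>x. restrict x W)) (count_space UNIV) H"
    by (subst distr_distr[OF _ restrict_meas[OF W]]) (auto simp: o_def)
  also have "\<dots> = measure_pmf (map_pmf H (Pi_pmf W undefined (\<lambda>_. p)))"
    by (simp add: KEY[OF W] map_pmf_rep_eq)
  finally show ?thesis .
qed

lemma DL_meas:
  fixes W :: "('d::finite \<Rightarrow> int) set" and p :: "'a::finite pmf"
  assumes W: "finite W"
  shows "(\<lambda>x. H (restrict x W)) \<in> measurable (bshift p) (count_space UNIV)"
  using measurable_compose[OF restrict_meas[OF W] measurable_count_space[of H]] by simp

lemma BR_restrict:
  fixes p :: "'a::finite pmf" and \<phi> :: "(('d::finite \<Rightarrow> int) \<Rightarrow> 'a) \<Rightarrow> (('d \<Rightarrow> int) \<Rightarrow> 'b::finite)"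
  shows "block_rule p \<phi> n x = block_rule p \<phi> n (restrict x (box n))"
  by (rule BR_loc) auto

lemma BR_None_sets:
  fixes p :: "'a::finite pmf" and \<phi> :: "(('d::finite \<Rightarrow> int) \<Rightarrow> 'a) \<Rightarrow> (('d \<Rightarrow> int) \<Rightarrow> 'b::finite)"
  shows "{x. block_rule p \<phi> n x = None} \<in> sets (bshift p)"
proof -
  have "{x. block_rule p \<phi> n x = None} = (\<lambda>x. block_rule p \<phi> n (restrict x (box n))) -` {None} \<inter> space (bshift p)"
    by (subst BR_restrict) auto
  also have "\<dots> \<in> sets (bshift p)"
    by (rule measurable_sets[OF DL_meas[OF finite_box]]) auto
  finally show ?thesis .
qed

lemma BR_None_prob:
  fixes p :: "'a::finite pmf" and q :: "'b::finite pmf"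
    and \<phi> :: "(('d::finite \<Rightarrow> int) \<Rightarrow> 'a) \<Rightarrow> (('d \<Rightarrow> int) \<Rightarrow> 'b)"
  assumes m: "\<phi> \<in> measurable (bshift p) (bshift q)"
  shows "measure (bshift p) {x. block_rule p \<phi> n x = None} = prob_R_gt p \<phi> n"
  unfolding prob_R_gt_def
proof (rule measure_eq_AE[OF _ BR_None_sets meas_R(2)[OF m]])
  show "AE x in bshift p. (x \<in> {x. block_rule p \<phi> n x = None}) = (x \<in> {x. enat n < coding_radius p \<phi> x})"
    using BR_ae[of p \<phi> n] by (rule AE_mp) (auto intro!: AE_I2 simp: phi_n_def not_le)
qed

lemma shift_neg: "shift (- u) x = (\<lambda>v. x (\<lambda>i. v i + u i))"
  by (simp add: shift_def)




definition perext :: "nat \<Rightarrow> (('d \<Rightarrow> int) \<Rightarrow> 'a) \<Rightarrow> (('d \<Rightarrow> int) \<Rightarrow> 'a)" where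
  "perext N xh = (\<lambda>v. xh (\<lambda>i. v i mod int N))"

lemma model_eq: "torus_model p \<phi> n N xh u = block_rule p \<phi> n (shift (-u) (perext N xh))"
  by (simp add: torus_model_def shift_neg perext_def)

lemma loc_W:
  fixes p :: "'a::finite pmf" and \<phi> :: "(('d::finite \<Rightarrow> int) \<Rightarrow> 'a) \<Rightarrow> (('d \<Rightarrow> int) \<Rightarrow> 'b::finite)"
  assumes "\<forall>v\<in>box n. (\<lambda>i. v i + u i) \<in> W"
  shows "block_rule p \<phi> n (shift (-u) (restrict y W)) = block_rule p \<phi> n (shift (-u) y)"
  by (rule BR_loc) (use assms in \<open>auto simp: shift_neg\<close>)

lemma TOR_map:
  fixes u0 :: "'d::finite \<Rightarrow> int" and p :: "'a pmf"
  shows "map_pmf (\<lambda>xh. H (restrict (perext N xh) (window u0 N))) (torus_pmf N p)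
       = map_pmf H (Pi_pmf (window u0 N) undefined (\<lambda>_. p))"
  by (simp add: TOR[symmetric] map_pmf_comp perext_def)

lemma P1:
  fixes p :: "'a::finite pmf" and q :: "'b::finite pmf"
    and \<phi> :: "(('d::finite \<Rightarrow> int) \<Rightarrow> 'a) \<Rightarrow> (('d \<Rightarrow> int) \<Rightarrow> 'b)"
  assumes m: "\<phi> \<in> measurable (bshift p) (bshift q)" and N: "2 * n + 1 \<le> N"
  shows "measure_pmf.prob (torus_pmf N p) {xh. torus_model p \<phi> n N xh u = None} = prob_R_gt p \<phi> n"
proof -
  define u0 where "u0 = (\<lambda>i. u i - int n - 1)"
  define W where "W = window u0 N"
  have W: "finite W" unfolding W_def by (rule finite_window)
  have inW: "\<forall>v\<in>box n. (\<lambda>i. v i + u i) \<in> W"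
  proof
    fix v :: "'d \<Rightarrow> int" assume v: "v \<in> box n"
    show "(\<lambda>i. v i + u i) \<in> W" unfolding W_def window_def u0_def mem_Collect_eq
    proof
      fix i
      have "\<bar>v i\<bar> \<le> int n" using v by (simp add: box_def)
      moreover have "int (2 * n + 1) \<le> int N" using N by simp
      ultimately show "u i - int n - 1 + 1 \<le> v i + u i \<and> v i + u i \<le> u i - int n - 1 + int N" by linarith
    qed
  qed
  define H where "H y = block_rule p \<phi> n (shift (-u) y)" for y
  have "measure_pmf.prob (torus_pmf N p) {xh. torus_model p \<phi> n N xh u = None}
      = measure_pmf.prob (torus_pmf N p) ((\<lambda>xh. H (restrict (perext N xh) W)) -` {None})"
    by (simp add: model_eq H_def loc_W[OF inW] vimage_def)
  also have "\<dots> = measure_pmf.prob (map_pmf H (Pi_pmf W undefined (\<lambda>_. p))) {None}"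
    unfolding W_def TOR_map[symmetric] by simp
  also have "\<dots> = measure (distr (bshift p) (count_space UNIV) (\<lambda>x. H (restrict x W))) {None}"
    by (simp add: DL[OF W])
  also have "\<dots> = measure (bshift p) ((\<lambda>x. H (restrict x W)) -` {None} \<inter> space (bshift p))"
    by (rule measure_distr[OF DL_meas[OF W]]) auto
  also have "(\<lambda>x. H (restrict x W)) -` {None} \<inter> space (bshift p) = shift (-u) -` {x. block_rule p \<phi> n x = None}"
    by (auto simp: H_def loc_W[OF inW])
  also have "measure (bshift p) \<dots> = measure (bshift p) {x. block_rule p \<phi> n x = None}"
    by (rule measure_shift[OF BR_None_sets])
  also have "\<dots> = prob_R_gt p \<phi> n" by (rule BR_None_prob[OF m])
  finally show ?thesis .
qed

lemma P1E:
  fixes p :: "'a::finite pmf" and q :: "'b::finite pmf"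
    and \<phi> :: "(('d::finite \<Rightarrow> int) \<Rightarrow> 'a) \<Rightarrow> (('d \<Rightarrow> int) \<Rightarrow> 'b)"
  assumes m: "\<phi> \<in> measurable (bshift p) (bshift q)" and N: "2 * n + 1 \<le> N"
  shows "exp_Jc p \<phi> N n = real N ^ CARD('d) * prob_R_gt p \<phi> n"
proof -
  have c: "real (card {u \<in> torus N. torus_model p \<phi> n N xh u = None}) =
      (\<Sum>u\<in>torus N. indicator {xh. torus_model p \<phi> n N xh u = None} xh)" for xh
  proof -
    have "(\<Sum>u\<in>torus N. indicator {xh. torus_model p \<phi> n N xh u = None} xh :: real)
        = (\<Sum>u\<in>torus N. if torus_model p \<phi> n N xh u = None then 1 else 0)"
      by (intro sum.cong refl) (simp add: indicator_def)
    also have "\<dots> = (\<Sum>u\<in>{u \<in> torus N. torus_model p \<phi> n N xh u = None}. 1)"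
      by (rule sum.inter_filter[OF finite_torus, symmetric])
    finally show ?thesis by simp
  qed
  have "exp_Jc p \<phi> N n = (\<Sum>u\<in>(torus N :: ('d \<Rightarrow> int) set).
      measure_pmf.expectation (torus_pmf N p) (indicator {xh. torus_model p \<phi> n N xh u = None}))"
    unfolding exp_Jc_def c
    by (rule Bochner_Integration.integral_sum[where f="\<lambda>u xh. indicator {xh. torus_model p \<phi> n N xh u = None} xh"]) (auto intro!: integrable_real_indicator simp: less_top[symmetric] measure_pmf.emeasure_finite)
  also have "\<dots> = (\<Sum>u\<in>(torus N :: ('d \<Rightarrow> int) set). prob_R_gt p \<phi> n)"
    by (intro sum.cong refl) (simp add: P1[OF m N])
  also have "\<dots> = real N ^ CARD('d) * prob_R_gt p \<phi> n"
    by (simp add: card_torus)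
  finally show ?thesis .
qed




lemma finite_restrict_range':
  fixes S :: "'i set" assumes "finite S"
  shows "finite (range (\<lambda>x. restrict (f x :: 'i \<Rightarrow> 'a::finite) S))"
proof -
  have "range (\<lambda>x. restrict (f x) S) \<subseteq> PiE S (\<lambda>_. UNIV)" by auto
  moreover have "finite (PiE S (\<lambda>_. UNIV::'a set))" using assms by (intro finite_PiE) auto
  ultimately show ?thesis by (rule finite_subset)
qed

lemma P2:
  fixes p :: "'a::finite pmf" and q :: "'b::finite pmf"
    and \<phi> :: "(('d::finite \<Rightarrow> int) \<Rightarrow> 'a) \<Rightarrow> (('d \<Rightarrow> int) \<Rightarrow> 'b)"
    and S :: "('d \<Rightarrow> int) set" and u0 :: "'d \<Rightarrow> int"
  assumes hom: "homomorphism p q \<phi>"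
    and SW: "(\<Union>s\<in>S. {v. \<forall>i. s i - int n \<le> v i \<and> v i \<le> s i + int n})
             \<subseteq> {v. \<forall>i. u0 i + 1 \<le> v i \<and> v i \<le> u0 i + int N}"
  shows "\<exists>lam :: ((('d \<Rightarrow> int) \<Rightarrow> 'b option) \<times> (('d \<Rightarrow> int) \<Rightarrow> 'b)) pmf.
              map_pmf fst lam = map_pmf (\<lambda>xh. restrict (torus_model p \<phi> n N xh) S) (torus_pmf N p)
            \<and> map_pmf snd lam = Pi_pmf S undefined (\<lambda>_. q)
            \<and> (\<forall>u\<in>S. AE w in measure_pmf lam. (fst w u \<noteq> Some (snd w u)) \<longleftrightarrow> fst w u = None)"
proof -
  have m: "\<phi> \<in> measurable (bshift p) (bshift q)" using hom by (simp add: homomorphism_def)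
  have sc: "\<phi> (shift w x) = shift w (\<phi> x)" for w x using hom by (simp add: homomorphism_def)
  have dq: "distr (bshift p) (bshift q) \<phi> = bshift q" using hom by (simp add: homomorphism_def)
  define W where "W = window u0 N"
  have W: "finite W" unfolding W_def by (rule finite_window)
  have inW: "\<forall>v\<in>box n. (\<lambda>i. v i + s i) \<in> W" if s: "s \<in> S" for s
  proof
    fix v :: "'d \<Rightarrow> int" assume v: "v \<in> box n"
    have "(\<lambda>i. v i + s i) \<in> {v. \<forall>i. s i - int n \<le> v i \<and> v i \<le> s i + int n}"
      unfolding mem_Collect_eq
    proof (intro allI)
      fix i
      have "\<bar>v i\<bar> \<le> int n" using v by (simp add: box_def)
      then show "s i - int n \<le> v i + s i \<and> v i + s i \<le> s i + int n" by linarith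
    qed
    then have "(\<lambda>i. v i + s i) \<in> (\<Union>s\<in>S. {v. \<forall>i. s i - int n \<le> v i \<and> v i \<le> s i + int n})"
      by (rule UN_I[OF s])
    then have "(\<lambda>i. v i + s i) \<in> {v. \<forall>i. u0 i + 1 \<le> v i \<and> v i \<le> u0 i + int N}"
      by (rule subsetD[OF SW])
    then show "(\<lambda>i. v i + s i) \<in> W" unfolding W_def window_def .
  qed
  have SsubW: "S \<subseteq> W"
  proof
    fix s assume s: "s \<in> S"
    have "(\<lambda>v. 0) \<in> box n" by (simp add: box_def)
    then show "s \<in> W" using inW[OF s] by auto
  qed
  have S: "finite S" using finite_subset[OF SsubW W] .
  define Gh where "Gh y = restrict (\<lambda>u. block_rule p \<phi> n (shift (-u) y)) S" for y
  have Gh_loc: "Gh (restrict y W) = Gh y" for y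
    unfolding Gh_def by (intro restrict_ext loc_W inW) 
  define Gy where "Gy x = restrict (\<phi> x) S" for x
  define G where "G x = (Gh (restrict x W), Gy x)" for x
  have Ghm: "(\<lambda>x. Gh (restrict x W)) \<in> measurable (bshift p) (count_space UNIV)"
    by (rule DL_meas[OF W])
  have Gym: "Gy \<in> measurable (bshift p) (count_space UNIV)"
    unfolding Gy_def by (rule measurable_compose[OF m restrict_meas[OF S]])
  have finG: "finite (range G)"
  proof -
    have "range G \<subseteq> range (\<lambda>x. Gh (restrict x W)) \<times> range Gy" by (auto simp: G_def)
    moreover have "finite (range (\<lambda>x. Gh (restrict x W)) \<times> range Gy)"
      unfolding Gh_def Gy_def
      by (intro finite_cartesian_product finite_restrict_range'[OF S])
    ultimately show "finite (range G)" by (rule finite_subset)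
  qed
  have Gm: "G \<in> measurable (bshift p) (count_space UNIV)"
  proof (rule meas_fin_range[OF finG])
    fix y :: "(('d \<Rightarrow> int) \<Rightarrow> 'b option) \<times> (('d \<Rightarrow> int) \<Rightarrow> 'b)"
    have "G -` {y} \<inter> space (bshift p) =
       ((\<lambda>x. Gh (restrict x W)) -` {fst y} \<inter> space (bshift p)) \<inter> (Gy -` {snd y} \<inter> space (bshift p))"
      by (cases y) (auto simp: G_def)
    also have "\<dots> \<in> sets (bshift p)"
      using measurable_sets[OF Ghm, of "{fst y}"] measurable_sets[OF Gym, of "{snd y}"] by auto
    finally show "G -` {y} \<inter> space (bshift p) \<in> sets (bshift p)" .
  qed
  define M where "M = distr (bshift p) (count_space UNIV) G"
  have PS: "prob_space M" unfolding M_def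
    by (rule prob_space.prob_space_distr[OF prob_space_bshift Gm])
  have sM: "sets M = UNIV" by (simp add: M_def)
  have AEr: "AE x in M. x \<in> range G"
    unfolding M_def by (subst AE_distr_iff[OF Gm]) auto
  have AEy: "AE x in M. x = y \<longrightarrow> measure M {x} \<noteq> 0" for y
  proof (cases "measure M {y} = 0")
    case True
    have "emeasure M {y} = 0"
      using True finite_measure.emeasure_eq_measure[of M] PS by (simp add: prob_space_def)
    then have "{y} \<in> null_sets M" using sM by (auto simp: null_sets_def)
    then have "AE x in M. x \<noteq> y" by (rule AE_I') auto
    then show ?thesis by (rule AE_mp) auto
  next
    case False
    then show ?thesis by auto
  qed
  have "AE x in M. \<forall>y\<in>range G. x = y \<longrightarrow> measure M {x} \<noteq> 0"
    by (rule AE_finite_allI[OF finG]) (rule AEy)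
  then have AEall: "AE x in M. measure M {x} \<noteq> 0"
    using AEr by (rule AE_mp[OF _ AE_mp]) (auto intro!: AE_I2)
  have Min: "M \<in> {M. prob_space M \<and> sets M = UNIV \<and> (AE x in M. measure M {x} \<noteq> 0)}"
    using PS sM AEall by simp
  define lam where "lam = Abs_pmf M"
  have lamM: "measure_pmf lam = M" unfolding lam_def by (rule Abs_pmf_inverse[OF Min])
  have "measure_pmf (map_pmf fst lam) = distr (bshift p) (count_space UNIV) (fst \<circ> G)"
    unfolding map_pmf_rep_eq lamM M_def
    by (rule distr_distr[OF measurable_count_space Gm])
  also have "fst \<circ> G = (\<lambda>x. Gh (restrict x W))" by (auto simp: G_def)
  also have "distr (bshift p) (count_space UNIV) (\<lambda>x. Gh (restrict x W)) = measure_pmf (map_pmf Gh (Pi_pmf W undefined (\<lambda>_. p)))"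
    by (rule DL[OF W])
  also have "map_pmf Gh (Pi_pmf W undefined (\<lambda>_. p)) = map_pmf (\<lambda>xh. Gh (restrict (perext N xh) W)) (torus_pmf N p)"
    unfolding W_def by (rule TOR_map[symmetric])
  also have "(\<lambda>xh. Gh (restrict (perext N xh) W)) = (\<lambda>xh. restrict (torus_model p \<phi> n N xh) S)"
    unfolding Gh_loc unfolding Gh_def model_eq by (rule refl)
  finally have fstl: "map_pmf fst lam = map_pmf (\<lambda>xh. restrict (torus_model p \<phi> n N xh) S) (torus_pmf N p)"
    by (simp only: measure_pmf_inject)
  have "measure_pmf (map_pmf snd lam) = distr (bshift p) (count_space UNIV) (snd \<circ> G)"
    unfolding map_pmf_rep_eq lamM M_def
    by (rule distr_distr[OF measurable_count_space Gm])
  also have "snd \<circ> G = (\<lambda>y. restrict y S) \<circ> \<phi>" by (auto simp: G_def Gy_def)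
  also have "distr (bshift p) (count_space UNIV) ((\<lambda>y. restrict y S) \<circ> \<phi>)
      = distr (distr (bshift p) (bshift q) \<phi>) (count_space UNIV) (\<lambda>y. restrict y S)"
    by (rule distr_distr[OF restrict_meas[OF S] m, symmetric])
  also have "\<dots> = measure_pmf (Pi_pmf S undefined (\<lambda>_. q))"
    unfolding dq by (rule KEY[OF S])
  finally have sndl: "map_pmf snd lam = Pi_pmf S undefined (\<lambda>_. q)"
    by (simp only: measure_pmf_inject)
  have AEl: "AE w in measure_pmf lam. (fst w u \<noteq> Some (snd w u)) \<longleftrightarrow> fst w u = None" if u: "u \<in> S" for u
  proof -
    have phiu: "\<phi> x u = \<phi> (shift (-u) x) (\<lambda>_. 0)" for x
    proof -
      have "\<phi> (shift (-u) x) (\<lambda>_. 0) = shift (-u) (\<phi> x) (\<lambda>_. 0)" by (simp only: sc)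
      also have "\<dots> = \<phi> x u" by (simp add: shift_def)
      finally show ?thesis by simp
    qed
    have GhW: "Gh (restrict x W) u = block_rule p \<phi> n (shift (-u) x)" for x
    proof -
      have "Gh (restrict x W) u = Gh x u" by (simp only: Gh_loc)
      also have "\<dots> = block_rule p \<phi> n (shift (-u) x)" using u by (simp add: Gh_def)
      finally show ?thesis .
    qed
    have "AE x in bshift p. block_rule p \<phi> n (shift (-u) x) = phi_n p \<phi> n (shift (-u) x)"
      by (rule AE_shift[OF BR_ae])
    then have "AE x in bshift p. (fst (G x) u \<noteq> Some (snd (G x) u)) \<longleftrightarrow> fst (G x) u = None"
      by (rule AE_mp) (auto intro!: AE_I2 simp: G_def GhW Gy_def u phiu phi_n_def)
    then show ?thesis
      unfolding lamM M_def by (subst AE_distr_iff[OF Gm]) auto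
  qed
  show ?thesis using fstl sndl AEl by blast
qed





lemma tail_sup:
  fixes f :: "nat \<Rightarrow> real" assumes f0: "\<And>n. 0 \<le> f n" and lim: "f \<longlonglongrightarrow> 0"
  shows "\<And>k n. n \<le> k \<Longrightarrow> f k \<le> (\<lambda>n. Sup (f ` {n..})) n"
    "antimono (\<lambda>n. Sup (f ` {n..}))" "\<And>n. 0 \<le> (\<lambda>n. Sup (f ` {n..})) n"
    "(\<lambda>n. Sup (f ` {n..})) \<longlonglongrightarrow> 0"
proof -
  define g where "g n = Sup (f ` {n..})" for n
  have "Bseq f" by (rule convergent_imp_Bseq[OF convergentI[OF lim]])
  then obtain K where K: "\<And>n. norm (f n) \<le> K" unfolding Bseq_def by blast
  have bdd: "bdd_above (f ` A)" for A
    by (rule bdd_aboveI[of _ K]) (use K in \<open>auto simp: abs_le_iff\<close>)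
  show 1: "f k \<le> (\<lambda>n. Sup (f ` {n..})) n" if "n \<le> k" for k n
    using that by (auto intro!: cSUP_upper bdd)
  show "antimono (\<lambda>n. Sup (f ` {n..}))"
  proof (rule antimonoI)
    fix n n' :: nat assume "n \<le> n'"
    then show "Sup (f ` {n'..}) \<le> Sup (f ` {n..})"
      by (intro cSUP_subset_mono bdd) auto
  qed
  show 3: "0 \<le> (\<lambda>n. Sup (f ` {n..})) n" for n
    using f0[of n] 1[of n n] by simp
  show "(\<lambda>n. Sup (f ` {n..})) \<longlonglongrightarrow> 0"
  proof (rule LIMSEQ_I)
    fix r :: real assume r: "0 < r"
    from LIMSEQ_D[OF lim, of "r/2"] r obtain no where no: "\<And>n. n \<ge> no \<Longrightarrow> norm (f n - 0) < r/2" by auto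
    have "norm (Sup (f ` {n..}) - 0) < r" if "n \<ge> no" for n
    proof -
      have "Sup (f ` {n..}) \<le> r/2"
      proof (rule cSUP_least)
        fix k assume "k \<in> {n..}"
        then show "f k \<le> r/2" using no[of k] that by auto
      qed auto
      then show ?thesis using 3[of n] r by simp
    qed
    then show "\<exists>no. \<forall>n\<ge>no. norm (Sup (f ` {n..}) - 0) < r" by blast
  qed
qed



lemma est1:
  fixes \<delta> :: real and N :: nat
  assumes N: "N \<ge> 4" and t: "2 / sqrt (1 + real N) \<le> \<delta>" and d3: "\<delta> \<le> 1/3"
  shows "nat \<lfloor>sqrt (real N)\<rfloor> \<le> nat \<lfloor>\<delta> * real N\<rfloor>"
    "2 * nat \<lfloor>\<delta> * real N\<rfloor> + 1 \<le> N"
    "\<delta> * real N / 2 \<le> real (nat \<lfloor>\<delta> * real N\<rfloor>)"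
proof -
  have Npos: "real N > 0" using N by simp
  have "sqrt (real N) * sqrt (1 + real N) = sqrt (real N * (1 + real N))"
    by (simp add: real_sqrt_mult)
  also have "\<dots> \<le> sqrt ((2 * real N)^2)"
    using N by (intro real_sqrt_le_mono) (simp add: power2_eq_square algebra_simps)
  also have "\<dots> = 2 * real N" using real_sqrt_abs[of "2 * real N"] by simp
  finally have a: "sqrt (real N) * sqrt (1 + real N) \<le> 2 * real N" .
  have sp: "sqrt (1 + real N) > 0" by simp
  have "sqrt (real N) \<le> 2 * real N / sqrt (1 + real N)"
    using a sp by (simp add: pos_le_divide_eq)
  also have "\<dots> = (2 / sqrt (1 + real N)) * real N" by simp
  also have "\<dots> \<le> \<delta> * real N" using t Npos by (intro mult_right_mono) auto
  finally have sq: "sqrt (real N) \<le> \<delta> * real N" .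
  show "nat \<lfloor>sqrt (real N)\<rfloor> \<le> nat \<lfloor>\<delta> * real N\<rfloor>"
    using sq by (intro nat_mono floor_mono)
  have dpos: "\<delta> > 0" using t sp by (smt (verit) divide_pos_pos)
  have fl: "real_of_int \<lfloor>\<delta> * real N\<rfloor> \<le> \<delta> * real N" "\<delta> * real N < real_of_int \<lfloor>\<delta> * real N\<rfloor> + 1"
    by linarith+
  have fl0: "0 \<le> \<lfloor>\<delta> * real N\<rfloor>" using dpos Npos by simp
  then have rm: "real (nat \<lfloor>\<delta> * real N\<rfloor>) = real_of_int \<lfloor>\<delta> * real N\<rfloor>" by simp
  have "\<delta> * real N \<le> real N / 3" using d3 Npos by (simp add: mult_right_mono)
  then have "2 * real (nat \<lfloor>\<delta> * real N\<rfloor>) + 1 \<le> real N" using rm fl N by linarith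
  then show "2 * nat \<lfloor>\<delta> * real N\<rfloor> + 1 \<le> N" by linarith
  have "sqrt 4 \<le> sqrt (real N)" using N by (intro real_sqrt_le_mono) simp
  then have "2 \<le> sqrt (real N)" by simp
  then have "2 \<le> \<delta> * real N" using sq by linarith
  then show "\<delta> * real N / 2 \<le> real (nat \<lfloor>\<delta> * real N\<rfloor>)" using rm fl by linarith
qed

lemma est2:
  fixes c \<delta> G Pm x Nr :: real
  assumes c: "c > 0" and Nr: "Nr > 0" and dpos: "\<delta> > 0" and x: "\<delta> * Nr / 2 \<le> x" and G: "G \<ge> 0"
    and dG: "G powr (1 / (2 * c)) \<le> \<delta>" and Pm: "Pm \<ge> 0" and PG: "Pm * x powr c \<le> G"
  shows "Pm * Nr powr c \<le> 2 powr c * G powr (1/2)"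
proof (cases "G = 0")
  case True
  have xpos: "x > 0" using x dpos Nr by (smt (verit) divide_pos_pos mult_pos_pos)
  then have "x powr c > 0" by simp
  then have "Pm = 0" using PG Pm True by (smt (verit) mult_pos_pos)
  then show ?thesis by simp
next
  case False
  then have Gp: "G > 0" using G by simp
  have xpos: "x > 0" using x dpos Nr by (smt (verit) divide_pos_pos mult_pos_pos)
  have xc: "x powr c > 0" using xpos by simp
  have Pm1: "Pm \<le> G / x powr c" using PG xc by (simp add: pos_le_divide_eq)
  have "(\<delta> * Nr / 2) powr c \<le> x powr c"
    using x dpos Nr c by (intro powr_mono2) auto
  then have xc2: "\<delta> powr c * Nr powr c / 2 powr c \<le> x powr c"
    using dpos Nr by (simp add: powr_mult powr_divide)
  have dc: "G powr (1/2) \<le> \<delta> powr c"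
  proof -
    have "(G powr (1 / (2 * c))) powr c \<le> \<delta> powr c"
      using dG c Gp by (intro powr_mono2) auto
    moreover have "(G powr (1 / (2 * c))) powr c = G powr (1/2)"
      using c by (simp add: powr_powr)
    ultimately show ?thesis by simp
  qed
  have Gh: "G powr (1/2) > 0" using Gp by simp
  have "Pm * Nr powr c \<le> G / x powr c * Nr powr c"
    using Pm1 Nr by (intro mult_right_mono) auto
  also have "\<dots> \<le> G / (\<delta> powr c * Nr powr c / 2 powr c) * Nr powr c"
  proof -
    have dn: "\<delta> powr c * Nr powr c / 2 powr c > 0" using dpos Nr by simp
    have "G / x powr c \<le> G / (\<delta> powr c * Nr powr c / 2 powr c)"
      using xc2 Gp dn xc mult_pos_pos[OF xc dn] by (intro divide_left_mono) (auto simp: ac_simps)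
    then show ?thesis using Nr by (intro mult_right_mono) auto
  qed
  also have "\<dots> = 2 powr c * G / \<delta> powr c"
    using Nr by (simp add: field_simps)
  also have "\<dots> \<le> 2 powr c * G / G powr (1/2)"
  proof -
    have "0 < \<delta> powr c * G powr (1 / 2)" using dpos Gh by simp
    moreover have "0 \<le> 2 powr c * G" using Gp by simp
    ultimately show ?thesis using dc by (intro divide_left_mono) auto
  qed
  also have "\<dots> = 2 powr c * G powr (1/2)"
  proof -
    have "G = G powr (1/2) * G powr (1/2)" using Gp by (simp add: powr_add[symmetric])
    then show ?thesis using Gh by (metis divide_eq_eq mult.assoc nonzero_mult_div_cancel_right order_less_irrefl times_divide_eq_right)
  qed
  finally show ?thesis .
qed


lemma asym:
  fixes P :: "nat \<Rightarrow> real" and E :: "nat \<Rightarrow> nat \<Rightarrow> real" and d :: nat and \<alpha> :: real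
  assumes d: "d \<ge> 1" and \<alpha>: "\<alpha> > 0" and P0: "\<And>n. 0 \<le> P n"
    and Eeq: "\<And>N m. 2 * m + 1 \<le> N \<Longrightarrow> E N m = real N ^ d * P m"
    and hyp: "P \<in> o(\<lambda>n. real n powr (- (real d * \<alpha>)))"
  shows "\<exists>\<delta>::nat \<Rightarrow> real. antimono \<delta> \<and> (\<forall>N. \<delta> N > 0) \<and> \<delta> \<longlonglongrightarrow> 0 \<and>
             (\<lambda>N. E N (nat \<lfloor>\<delta> N * real N\<rfloor>)) \<in> o(\<lambda>N. real N powr (real d * (1 - \<alpha>)))"
proof -
  define c where "c = real d * \<alpha>"
  have c: "c > 0" using d \<alpha> by (simp add: c_def)
  define f where "f n = P n * real n powr c" for n
  have f0: "0 \<le> f n" for n using P0[of n] by (simp add: f_def)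
  have "(\<lambda>n. P n / real n powr (- c)) \<longlonglongrightarrow> 0"
    using smalloD_tendsto[OF hyp] by (simp add: c_def)
  moreover have "eventually (\<lambda>n. P n / real n powr (- c) = f n) sequentially"
    using eventually_gt_at_top[of 0]
    by eventually_elim (simp add: f_def powr_minus divide_inverse)
  ultimately have flim: "f \<longlonglongrightarrow> 0" by (rule Lim_transform_eventually)
  define g where "g n = Sup (f ` {n..})" for n
  note gs = tail_sup[OF f0 flim, folded g_def]
  have g1: "n \<le> k \<Longrightarrow> f k \<le> g n" for n k using gs(1) by simp
  have g2: "antimono g" using gs(2) by (simp add: g_def[abs_def])
  have g3: "0 \<le> g n" for n using gs(3) by simp
  have g4: "g \<longlonglongrightarrow> 0" using gs(4) by (simp add: g_def[abs_def])
  define s where "s N = nat \<lfloor>sqrt (real N)\<rfloor>" for N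
  have s_mono: "s N \<le> s N'" if "N \<le> N'" for N N'
    unfolding s_def using that by (intro nat_mono floor_mono real_sqrt_le_mono) simp
  have s_lim: "filterlim s sequentially sequentially"
    unfolding filterlim_at_top
  proof
    fix Z :: nat
    show "eventually (\<lambda>N. Z \<le> s N) sequentially"
      using eventually_ge_at_top[of "Z * Z"]
    proof eventually_elim
      case (elim N)
      have "real Z = sqrt (real (Z * Z))" by simp
      also have "\<dots> \<le> sqrt (real N)" using elim by (intro real_sqrt_le_mono) (simp only: of_nat_le_iff)
      finally have "real Z \<le> sqrt (real N)" .
      then have "int Z \<le> \<lfloor>sqrt (real N)\<rfloor>" by (simp add: le_floor_iff)
      then show ?case by (simp add: s_def)
    qed
  qed
  have gs_lim: "(\<lambda>N. g (s N)) \<longlonglongrightarrow> 0" by (rule filterlim_compose[OF g4 s_lim])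
  define h where "h N = g (s N) powr (1 / (2 * c))" for N
  have h_lim: "h \<longlonglongrightarrow> 0" unfolding h_def
    by (rule tendsto_zero_powrI[OF gs_lim tendsto_const]) (use g3 c in auto)
  define t where "t N = 2 / sqrt (1 + real N)" for N :: nat
  have t_pos: "t N > 0" for N by (simp add: t_def)
  have "filterlim (\<lambda>N. sqrt (1 + real N)) at_top sequentially"
    by (rule filterlim_compose[OF sqrt_at_top filterlim_tendsto_add_at_top[OF tendsto_const filterlim_real_sequentially]])
  then have "(\<lambda>N. inverse (sqrt (1 + real N))) \<longlonglongrightarrow> 0" by (rule tendsto_inverse_0_at_top)
  then have "(\<lambda>N. 2 * inverse (sqrt (1 + real N))) \<longlonglongrightarrow> 2 * 0" by (intro tendsto_mult tendsto_const)
  then have t_lim: "t \<longlonglongrightarrow> 0" by (simp add: t_def[abs_def] divide_inverse)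
  define \<delta> where "\<delta> N = max (h N) (t N)" for N
  have \<delta>_mono: "antimono \<delta>"
  proof (rule antimonoI)
    fix N N' :: nat assume NN: "N \<le> N'"
    have "g (s N') \<le> g (s N)" using g2 s_mono[OF NN] by (auto dest: antimonoD)
    then have "h N' \<le> h N" unfolding h_def using g3 c by (intro powr_mono2) auto
    moreover have "t N' \<le> t N" unfolding t_def using NN
      by (intro divide_left_mono real_sqrt_le_mono mult_pos_pos) auto
    ultimately show "\<delta> N' \<le> \<delta> N" unfolding \<delta>_def by (rule max.mono)
  qed
  have \<delta>_pos: "\<forall>N. \<delta> N > 0" using t_pos by (simp add: \<delta>_def less_max_iff_disj)
  have \<delta>_lim: "\<delta> \<longlonglongrightarrow> 0"
    using tendsto_max[OF h_lim t_lim] by (simp add: \<delta>_def[abs_def])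
  define m where "m N = nat \<lfloor>\<delta> N * real N\<rfloor>" for N
  define u where "u N = 2 powr c * g (s N) powr (1/2)" for N
  have u_lim: "u \<longlonglongrightarrow> 0"
  proof -
    have "(\<lambda>N. g (s N) powr (1/2)) \<longlonglongrightarrow> 0"
      by (rule tendsto_zero_powrI[OF gs_lim tendsto_const]) (use g3 in auto)
    then have "(\<lambda>N. 2 powr c * g (s N) powr (1/2)) \<longlonglongrightarrow> 2 powr c * 0"
      by (intro tendsto_mult tendsto_const)
    then show ?thesis by (simp add: u_def[abs_def])
  qed
  have ev3: "eventually (\<lambda>N. \<delta> N \<le> 1/3) sequentially"
    using order_tendstoD(2)[OF \<delta>_lim, of "1/3"] by (auto elim: eventually_mono)
  have ev: "eventually (\<lambda>N. 0 \<le> E N (m N) / real N powr (real d * (1 - \<alpha>)) \<and>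
      E N (m N) / real N powr (real d * (1 - \<alpha>)) \<le> u N) sequentially"
    using ev3 eventually_ge_at_top[of 4]
  proof eventually_elim
    case (elim N)
    have tN: "2 / sqrt (1 + real N) \<le> \<delta> N" by (simp add: \<delta>_def t_def)
    note e1 = est1[OF elim(2) tN elim(1), folded m_def s_def]
    have Npos: "real N > 0" using elim by simp
    have EN: "E N (m N) = real N ^ d * P (m N)" by (rule Eeq[OF e1(2)])
    have pw: "real N ^ d / real N powr (real d * (1 - \<alpha>)) = real N powr c"
    proof -
      have "real N ^ d = real N powr (real d)" using Npos by (simp add: powr_realpow)
      then have "real N ^ d / real N powr (real d * (1 - \<alpha>)) = real N powr (real d - real d * (1 - \<alpha>))"
        using Npos by (simp add: powr_diff)
      also have "real d - real d * (1 - \<alpha>) = c" by (simp add: c_def algebra_simps)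
      finally show ?thesis .
    qed
    have ratio: "E N (m N) / real N powr (real d * (1 - \<alpha>)) = P (m N) * real N powr c"
    proof -
      have "E N (m N) / real N powr (real d * (1 - \<alpha>)) = P (m N) * (real N ^ d / real N powr (real d * (1 - \<alpha>)))"
        by (simp add: EN)
      then show ?thesis using pw by simp
    qed
    have fm: "P (m N) * real (m N) powr c \<le> g (s N)"
      using g1[OF e1(1)] by (simp add: f_def)
    have hN: "g (s N) powr (1 / (2 * c)) \<le> \<delta> N" by (simp add: \<delta>_def h_def)
    have "P (m N) * real N powr c \<le> 2 powr c * g (s N) powr (1/2)"
      by (rule est2[OF c Npos \<delta>_pos[rule_format] e1(3) g3 hN P0 fm])
    then show ?case using ratio P0[of "m N"] by (simp add: u_def)
  qed
  have "(\<lambda>N. E N (m N) / real N powr (real d * (1 - \<alpha>))) \<longlonglongrightarrow> 0"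
    by (rule tendsto_sandwich[OF _ _ tendsto_const u_lim])
       (use ev in \<open>auto elim: eventually_mono\<close>)
  moreover have "eventually (\<lambda>N. real N powr (real d * (1 - \<alpha>)) \<noteq> 0) sequentially"
    using eventually_gt_at_top[of 0] by eventually_elim simp
  ultimately have "(\<lambda>N. E N (m N)) \<in> o(\<lambda>N. real N powr (real d * (1 - \<alpha>)))"
    by (rule smalloI_tendsto)
  then show ?thesis using \<delta>_mono \<delta>_pos \<delta>_lim unfolding m_def by blast
qed


theorem proposition4:
  fixes p :: "'a::finite pmf" and q :: "'b::finite pmf"
    and \<phi> :: "(('d::finite \<Rightarrow> int) \<Rightarrow> 'a) \<Rightarrow> (('d \<Rightarrow> int) \<Rightarrow> 'b)"
  assumes hom: "homomorphism p q \<phi>"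
    and fin: "finitary p \<phi>"
  shows
    "(\<forall>n N. 2 * n + 1 \<le> N \<longrightarrow>
        (\<forall>u\<in>torus N. measure_pmf.prob (torus_pmf N p) {xh. torus_model p \<phi> n N xh u = None}
                      = prob_R_gt p \<phi> n) \<and>
        exp_Jc p \<phi> N n = real N ^ CARD('d) * prob_R_gt p \<phi> n)
     \<and> (\<forall>\<alpha>::real. \<alpha> > 0 \<longrightarrow>
          (\<lambda>n. prob_R_gt p \<phi> n) \<in> o(\<lambda>n. real n powr (- (real CARD('d) * \<alpha>))) \<longrightarrow>
          (\<exists>\<delta>::nat \<Rightarrow> real. antimono \<delta> \<and> (\<forall>N. \<delta> N > 0) \<and> \<delta> \<longlonglongrightarrow> 0 \<and>
             (\<lambda>N. exp_Jc p \<phi> N (nat \<lfloor>\<delta> N * real N\<rfloor>))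
               \<in> o(\<lambda>N. real N powr (real CARD('d) * (1 - \<alpha>)))))
     \<and> (\<forall>n N (S :: ('d \<Rightarrow> int) set) (u0 :: 'd \<Rightarrow> int). 2 * n + 1 \<le> N \<longrightarrow>
          (\<Union>s\<in>S. {v. \<forall>i. s i - int n \<le> v i \<and> v i \<le> s i + int n})
             \<subseteq> {v. \<forall>i. u0 i + 1 \<le> v i \<and> v i \<le> u0 i + int N} \<longrightarrow>
          (\<exists>lam :: ((('d \<Rightarrow> int) \<Rightarrow> 'b option) \<times> (('d \<Rightarrow> int) \<Rightarrow> 'b)) pmf.
              map_pmf fst lam = map_pmf (\<lambda>xh. restrict (torus_model p \<phi> n N xh) S) (torus_pmf N p)
            \<and> map_pmf snd lam = Pi_pmf S undefined (\<lambda>_. q)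
            \<and> (\<forall>u\<in>S. AE w in measure_pmf lam. (fst w u \<noteq> Some (snd w u)) \<longleftrightarrow> fst w u = None)))"
  proof -
  have m: "\<phi> \<in> measurable (bshift p) (bshift q)" using hom by (simp add: homomorphism_def)
  have part1: "\<forall>n N. 2 * n + 1 \<le> N \<longrightarrow>
        (\<forall>u\<in>torus N. measure_pmf.prob (torus_pmf N p) {xh. torus_model p \<phi> n N xh u = None}
                      = prob_R_gt p \<phi> n) \<and>
        exp_Jc p \<phi> N n = real N ^ CARD('d) * prob_R_gt p \<phi> n"
    using P1[OF m] P1E[OF m] by blast
  have part2: "\<forall>\<alpha>::real. \<alpha> > 0 \<longrightarrow>
          (\<lambda>n. prob_R_gt p \<phi> n) \<in> o(\<lambda>n. real n powr (- (real CARD('d) * \<alpha>))) \<longrightarrow>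
          (\<exists>\<delta>::nat \<Rightarrow> real. antimono \<delta> \<and> (\<forall>N. \<delta> N > 0) \<and> \<delta> \<longlonglongrightarrow> 0 \<and>
             (\<lambda>N. exp_Jc p \<phi> N (nat \<lfloor>\<delta> N * real N\<rfloor>))
               \<in> o(\<lambda>N. real N powr (real CARD('d) * (1 - \<alpha>))))"
  proof (intro allI impI)
    fix \<alpha> :: real assume a: "\<alpha> > 0"
      and hyp: "(\<lambda>n. prob_R_gt p \<phi> n) \<in> o(\<lambda>n. real n powr (- (real CARD('d) * \<alpha>)))"
    have d: "CARD('d) \<ge> 1" using finite_UNIV_card_ge_0[where 'a='d] by simp
    show "\<exists>\<delta>::nat \<Rightarrow> real. antimono \<delta> \<and> (\<forall>N. \<delta> N > 0) \<and> \<delta> \<longlonglongrightarrow> 0 \<and>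
             (\<lambda>N. exp_Jc p \<phi> N (nat \<lfloor>\<delta> N * real N\<rfloor>))
               \<in> o(\<lambda>N. real N powr (real CARD('d) * (1 - \<alpha>)))"
      by (rule asym[OF d a _ _ hyp]) (auto simp: prob_R_gt_def P1E[OF m])
  qed
  have part3: "\<forall>n N (S :: ('d \<Rightarrow> int) set) (u0 :: 'd \<Rightarrow> int). 2 * n + 1 \<le> N \<longrightarrow>
          (\<Union>s\<in>S. {v. \<forall>i. s i - int n \<le> v i \<and> v i \<le> s i + int n})
             \<subseteq> {v. \<forall>i. u0 i + 1 \<le> v i \<and> v i \<le> u0 i + int N} \<longrightarrow>
          (\<exists>lam :: ((('d \<Rightarrow> int) \<Rightarrow> 'b option) \<times> (('d \<Rightarrow> int) \<Rightarrow> 'b)) pmf.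
              map_pmf fst lam = map_pmf (\<lambda>xh. restrict (torus_model p \<phi> n N xh) S) (torus_pmf N p)
            \<and> map_pmf snd lam = Pi_pmf S undefined (\<lambda>_. q)
            \<and> (\<forall>u\<in>S. AE w in measure_pmf lam. (fst w u \<noteq> Some (snd w u)) \<longleftrightarrow> fst w u = None))"
    using P2[OF hom] by blast
  show ?thesis using part1 part2 part3 by blast
qed

end
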